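(* Let $-\infty\le\alpha<\beta\le+\infty$ and let $a,b,d,e$ be differentiable real functions on $(\alpha,\beta)$ with $d(x)>0$ and $e(x)>0$ there. Let $h$ be a real function, differentiable on $(\alpha,\beta)$, satisfying the Riccati equation $$h'(x)=d(x)-(b(x)-a(x))h(x)-e(x)h(x)^2,\qquad x\in(\alpha,\beta).$$ If $h(\alpha^+)>0$, then $h(x)>0$ for all $x\in(\alpha,\beta)$.
   Context: $h(\alpha^+)$ denotes the one-sided limit $\lim_{x\to\alpha^+}h(x)$. *)

theory Defs
  imports "HOL-Analysis.Analysis"
begin

definition eint :: "ereal \<Rightarrow> ereal \<Rightarrow> real set" where
  "eint \<alpha> \<beta> = {x::real. \<alpha> < ereal x \<and> ereal x < \<beta>}"

definition at_right_ereal :: "ereal \<Rightarrow> real filter" where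
  "at_right_ereal \<alpha> = (if \<alpha> = -\<infinity> then at_bot else at_right (real_of_ereal \<alpha>))"

end

theory Submission
  imports Defs
begin

theorem lemma1:
  fixes \<alpha> \<beta> :: ereal and a b d e h :: "real \<Rightarrow> real"
  assumes "\<alpha> < \<beta>"
    and "\<forall>x\<in>eint \<alpha> \<beta>. a differentiable (at x)"
    and "\<forall>x\<in>eint \<alpha> \<beta>. b differentiable (at x)"
    and "\<forall>x\<in>eint \<alpha> \<beta>. d differentiable (at x)"
    and "\<forall>x\<in>eint \<alpha> \<beta>. e differentiable (at x)"
    and "\<forall>x\<in>eint \<alpha> \<beta>. d x > 0"
    and "\<forall>x\<in>eint \<alpha> \<beta>. e x > 0"
    and "\<forall>x\<in>eint \<alpha> \<beta>.
           (h has_real_derivative (d x - (b x - a x) * h x - e x * (h x)\<^sup>2)) (at x)"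
    and "\<exists>L::real. L > 0 \<and> (h \<longlongrightarrow> L) (at_right_ereal \<alpha>)"
  shows "\<forall>x\<in>eint \<alpha> \<beta>. h x > 0"
proof (rule ccontr)
  assume "\<not> ?thesis"
  then obtain x0 where x0: "x0 \<in> eint \<alpha> \<beta>" "h x0 \<le> 0" by force
  obtain L where L: "L > 0" "(h \<longlongrightarrow> L) (at_right_ereal \<alpha>)" using assms(9) by blast
  have ev: "eventually (\<lambda>t. h t > 0) (at_right_ereal \<alpha>)"
    using order_tendstoD(1)[OF L(2) L(1)] .
  have "\<exists>y. y \<in> eint \<alpha> \<beta> \<and> y < x0 \<and> h y > 0 \<and> (\<forall>t. y \<le> t \<and> t \<le> x0 \<longrightarrow> t \<in> eint \<alpha> \<beta>)"
  proof (cases "\<alpha> = -\<infinity>")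
    case True
    then obtain N where N: "\<forall>t\<le>N. h t > 0" using ev
      by (auto simp: at_right_ereal_def eventually_at_bot_linorder)
    define y where "y = min N (x0 - 1)"
    have "\<forall>t. y \<le> t \<and> t \<le> x0 \<longrightarrow> t \<in> eint \<alpha> \<beta>"
      using x0(1) True by (auto simp: eint_def) (meson ereal_less_eq(3) le_less_trans)
    moreover have "y < x0" "h y > 0" using N by (auto simp: y_def)
    ultimately show ?thesis using less_imp_le by blast
  next
    case False
    have "\<alpha> \<noteq> \<infinity>" using assms(1) by auto
    with False obtain r where r: "\<alpha> = ereal r" by (cases \<alpha>) auto
    then obtain c where c: "c > r" "\<forall>t. r < t \<and> t < c \<longrightarrow> h t > 0" using ev
      by (auto simp: at_right_ereal_def eventually_at_right_field)
    have rx: "r < x0" using x0(1) r by (auto simp: eint_def)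
    define y where "y = (r + min c x0) / 2"
    have "\<forall>t. y \<le> t \<and> t \<le> x0 \<longrightarrow> t \<in> eint \<alpha> \<beta>"
    proof (intro allI impI)
      fix t assume t: "y \<le> t \<and> t \<le> x0"
      have "r < t" using t c rx by (auto simp: y_def)
      moreover have "ereal t < \<beta>" using t x0(1) by (auto simp: eint_def) (meson ereal_less_eq(3) le_less_trans)
      ultimately show "t \<in> eint \<alpha> \<beta>" using r by (auto simp: eint_def)
    qed
    moreover have "y < x0" "h y > 0" using c rx by (auto simp: y_def)
    ultimately show ?thesis using less_imp_le by blast
  qed
  then obtain y where y: "y < x0" "h y > 0" "\<forall>t. y \<le> t \<and> t \<le> x0 \<longrightarrow> t \<in> eint \<alpha> \<beta>"
    by blast
  have der: "\<And>t. t \<in> eint \<alpha> \<beta> \<Longrightarrow> (h has_real_derivative (d t - (b t - a t) * h t - e t * (h t)\<^sup>2)) (at t)"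
    using assms(8) by blast
  have cont: "continuous_on {y..x0} h"
    using y(3) der by (intro continuous_at_imp_continuous_on) (meson DERIV_isCont atLeastAtMost_iff)
  define Z where "Z = {t \<in> {y..x0}. h t \<le> 0}"
  have Zcl: "closed Z" unfolding Z_def
    using continuous_closed_preimage[OF cont closed_atLeastAtMost, of "{..0}"]
    by (simp add: vimage_def Int_def conj_commute)
  have Zne: "Z \<noteq> {}" using x0 y by (auto simp: Z_def)
  have Zbd: "bdd_below Z" by (auto simp: Z_def bdd_below_def)
  define z where "z = Inf Z"
  have zZ: "z \<in> Z" using closed_contains_Inf[OF Zne Zbd Zcl] by (simp add: z_def)
  have zmin: "\<And>t. t \<in> Z \<Longrightarrow> z \<le> t" using cInf_lower[OF _ Zbd] by (simp add: z_def)
  have zy: "y < z" using zZ y(2) by (auto simp: Z_def less_eq_real_def)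
  have pos: "\<And>t. y \<le> t \<Longrightarrow> t < z \<Longrightarrow> h t > 0"
  proof -
    fix t assume "y \<le> t" "t < z"
    moreover have "z \<le> x0" using zZ by (auto simp: Z_def)
    ultimately show "h t > 0" using zmin[of t] by (force simp: Z_def)
  qed
  have zI: "z \<in> eint \<alpha> \<beta>" using zZ y(3) by (auto simp: Z_def)
  have hz0: "h z \<ge> 0"
  proof (rule ccontr)
    assume "\<not> h z \<ge> 0"
    then have "h z < 0" by simp
    have "continuous_on {y..z} h" using cont zZ by (auto simp: Z_def intro: continuous_on_subset)
    then obtain t where "t \<ge> y" "t \<le> z" "h t = 0"
      using IVT2'[of h z 0 y] \<open>h z < 0\<close> y(2) zy by force
    then show False using pos[of t] \<open>h z < 0\<close> by (cases "t = z") auto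
  qed
  then have hz: "h z = 0" using zZ by (auto simp: Z_def)
  have dz: "(h has_real_derivative d z) (at z)" using der[OF zI] hz by simp
  have "d z > 0" using assms(6) zI by blast
  from DERIV_pos_inc_left[OF dz this] obtain \<delta> where
    \<delta>: "\<delta> > 0" "\<And>k. 0 < k \<Longrightarrow> k < \<delta> \<Longrightarrow> h (z - k) < h z" by blast
  define k where "k = min (\<delta>/2) (z - y)"
  have "0 < k" "k < \<delta>" using \<delta> zy by (auto simp: k_def)
  then have "h (z - k) < 0" using \<delta>(2) hz by force
  moreover have "h (z - k) > 0" using pos[of "z - k"] \<open>0 < k\<close> by (auto simp: k_def)
  ultimately show False by simp
qed

end
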